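(* For every integer $n\ge 1$, $(n-1) P_{n-1}^3=(2 P_{n}^2+(n-1) P_{2 n-1}) P_{n-1}+(n+1) P_{n} (P_{n} P_{n+1}-P_{2 n})$, where $P_k$ denotes the $k$-th Pell number.
   Context: The Pell numbers are defined by $P_0=0$, $P_1=1$, $P_k=2P_{k-1}+P_{k-2}$ for $k\ge 2$. *)

theory Defs
  imports Main
begin

fun pell :: "nat \<Rightarrow> int" where
  "pell 0 = 0"
| "pell (Suc 0) = 1"
| "pell (Suc (Suc k)) = 2 * pell (Suc k) + pell k"

end

theory Submission imports Defs begin
lemma pell_add: "pell (m + n + 1) = pell (m + 1) * pell (n + 1) + pell m * pell n"
proof (induction m arbitrary: n rule: pell.induct)
  case 1 then show ?case by simp
next
  case 2
  then show ?case by simp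
next
  case (3 k)
  have a: "pell (Suc (Suc k) + n + 1) = 2 * pell (Suc k + n + 1) + pell (k + n + 1)"
    by simp
  have b: "pell (Suc (Suc k) + 1) = 2 * pell (Suc k + 1) + pell (k + 1)"
    by simp
  show ?case using "3.IH"[of n] a b by (simp add: algebra_simps)
qed
theorem proposition7p5:
  fixes n :: nat
  assumes "n \<ge> 1"
  shows "(int n - 1) * pell (n - 1) ^ 3 =
         (2 * pell n ^ 2 + (int n - 1) * pell (2 * n - 1)) * pell (n - 1)
         + (int n + 1) * pell n * (pell n * pell (n + 1) - pell (2 * n))"
proof -
  obtain m where n: "n = m + 1" using assms by (cases n) auto
  have x1: "2 * n - 1 = m + m + 1" using n by simp
  have e1: "pell (2 * n - 1) = pell n^2 + pell m ^2"
    unfolding x1 pell_add power2_eq_square using n by simp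
  have x2: "2 * n = (m + 1) + m + 1" using n by simp
  have e3: "pell (n+1) = 2 * pell n + pell m" by (simp add: n)
  have e2: "pell (2 * n) = pell n * (2 * pell n + 2 * pell m)"
    unfolding x2 pell_add using e3 n by (simp add: algebra_simps)
  have n1: "n - 1 = m" using n by auto
  have i: "int n - 1 = int m" "int n + 1 = int m + 2" using n by auto
  have g: "\<And>a b k::int. k * b^3 = (2*a^2 + k*(a^2+b^2))*b + (k+2)*a*(a*(2*a+b) - a*(2*a+2*b))"
    by (simp add: algebra_simps power2_eq_square power3_eq_cube)
  show ?thesis unfolding e1 e2 n1 i e3 by (rule g)
qed
end
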